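(* Let $X$ be a nonnegative integer-valued random variable whose PGF $X(z)$ has radius of convergence $r>1$, with mean $\mu=X'(1)>0$ and variance $\sigma^2>0$, such that $|X(z)|<X(r_1)$ whenever $|z|=r_1$, $z\ne r_1$, $r_1\in(0,r)$. For positive integers $n,s$ let $A(z)=X(z)^n$, with $n\mu<s$ and degree of $X(z)$ larger than $s/n$, and let $Z_0$ be the zero of $z^s-A(z)$ of minimal modulus in $1<|z|<r$. Suppose $\frac{n\mu}{s}=1-\frac{\gamma}{\sqrt s}$ with $\gamma$ bounded away from $0$ and $\infty$ as $s\to\infty$. Then, as $s\to\infty$, $$\frac{1}{Z_0^{N+1}}=\exp\Big(\frac{-2L\gamma\mu}{\sigma^2}\Big)\big(1+O(s^{-1/2})\big)$$ whenever $N+1=L\sqrt{s}$ with $L>0$ bounded away from $0$ and $\infty$.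
   Context: $\sigma^2=X''(1)-X'(1)^2+X'(1)$. $Z_0$ is real and larger than $1$. $O$-terms refer to $s\to\infty$ with constants independent of $s$. *)

theory Defs
  imports "HOL-Probability.Probability"
begin

definition pgf :: "nat pmf \<Rightarrow> complex \<Rightarrow> complex" where
  "pgf X z = (\<Sum>k. complex_of_real (pmf X k) * z ^ k)"

definition pgf_real :: "nat pmf \<Rightarrow> real \<Rightarrow> real" where
  "pgf_real X x = (\<Sum>k. pmf X k * x ^ k)"

definition pgf_radius :: "nat pmf \<Rightarrow> ereal" where
  "pgf_radius X = conv_radius (\<lambda>k. complex_of_real (pmf X k))"

text \<open>X'(1) and X''(1) (series of the derivatives of the PGF, evaluated at 1).\<close>
definition pgf_d1 :: "nat pmf \<Rightarrow> real" where
  "pgf_d1 X = (\<Sum>k. real k * pmf X k)"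

definition pgf_d2 :: "nat pmf \<Rightarrow> real" where
  "pgf_d2 X = (\<Sum>k. real k * (real k - 1) * pmf X k)"

definition pgf_var :: "nat pmf \<Rightarrow> real" where
  "pgf_var X = pgf_d2 X - (pgf_d1 X)\<^sup>2 + pgf_d1 X"

end

theory Submission
  imports Defs
begin

lemma d1: "x \<ge> (0::real) \<Longrightarrow> ((\<lambda>x::real. ln (1+x) - x + x^2/2) has_real_derivative 1/(1+x) - 1 + x) (at x)"
  by (rule derivative_eq_intros refl | simp add: field_simps)+
lemma d2: "x \<ge> (0::real) \<Longrightarrow> ((\<lambda>x::real. x - x^2/2 + x^3/3 - ln (1+x)) has_real_derivative 1 - x + x^2 - 1/(1+x)) (at x)"
  by (rule derivative_eq_intros refl | simp add: field_simps power2_eq_square)+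

lemma ln_lower3:
  fixes w :: real assumes "0 \<le> w"
  shows "w - w^2/2 \<le> ln (1+w)"
proof -
  define g where "g = (\<lambda>x::real. ln (1+x) - x + x^2/2)"
  have "g 0 \<le> g w"
  proof (rule deriv_nonneg_imp_mono[where g = g and a = 0 and b = w and g' = "\<lambda>x. 1/(1+x) - 1 + x"])
    fix x assume x: "x \<in> {0..w}"
    have x0: "0 \<le> x" using x by simp
    show "(g has_real_derivative 1/(1+x) - 1 + x) (at x)"
      unfolding g_def by (rule d1[OF x0])
    have "1/(1+x) - 1 + x = x^2/(1+x)" using x by (simp add: field_simps power2_eq_square)
    thus "0 \<le> 1/(1+x) - 1 + x" using x by simp
  qed (use assms in auto)
  thus ?thesis by (simp add: g_def)
qed

lemma ln_upper3:
  fixes w :: real assumes "0 \<le> w"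
  shows "ln (1+w) \<le> w - w^2/2 + w^3/3"
proof -
  define g where "g = (\<lambda>x::real. x - x^2/2 + x^3/3 - ln (1+x))"
  have "g 0 \<le> g w"
  proof (rule deriv_nonneg_imp_mono[where g = g and a = 0 and b = w and g' = "\<lambda>x. 1 - x + x^2 - 1/(1+x)"])
    fix x assume x: "x \<in> {0..w}"
    have x0: "0 \<le> x" using x by simp
    show "(g has_real_derivative 1 - x + x^2 - 1/(1+x)) (at x)"
      unfolding g_def by (rule d2[OF x0])
    have "1 - x + x^2 - 1/(1+x) = x^3/(1+x)" using x by (simp add: field_simps power2_eq_square power3_eq_cube)
    thus "0 \<le> 1 - x + x^2 - 1/(1+x)" using x by simp
  qed (use assms in auto)
  thus ?thesis by (simp add: g_def)
qed

lemma ln_abs3: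
  fixes w :: real assumes "0 \<le> w"
  shows "\<bar>ln (1+w) - (w - w^2/2)\<bar> \<le> w^3"
  using ln_lower3[OF assms] ln_upper3[OF assms] assms by auto

lemma ln_abs2:
  fixes w :: real assumes "0 \<le> w"
  shows "\<bar>ln (1+w) - w\<bar> \<le> w^2"
  using ln_lower3[OF assms] ln_add_one_self_le_self[OF assms] assms by auto

definition Rk :: "real \<Rightarrow> nat \<Rightarrow> real" where
  "Rk h k = (1+h)^k - 1 - real k * h - real k * (real k - 1) / 2 * h^2"

lemma Rk_Suc: "Rk h (Suc k) = (1+h) * Rk h k + real k * (real k - 1)/2 * h^3"
  unfolding Rk_def by (simp add: field_simps power2_eq_square power3_eq_cube)

lemma Rk_bounds:
  fixes h h0 :: real assumes "0 \<le> h" "h \<le> h0" "0 < h0"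
  shows "0 \<le> Rk h k \<and> Rk h k \<le> (h/h0)^3 * Rk h0 k"
proof (induction k)
  case 0 thus ?case by (simp add: Rk_def)
next
  case (Suc k)
  have nn: "0 \<le> real k * (real k - 1)" by (cases k) auto
  have R0: "0 \<le> Rk h0 k"
  proof (induction k)
    case 0 thus ?case by (simp add: Rk_def)
  next
    case (Suc k)
    have "0 \<le> real k * (real k - 1)" by (cases k) auto
    thus ?case using Suc assms by (simp add: Rk_Suc)
  qed
  have t: "0 \<le> (h/h0)^3" "(h/h0)^3 \<le> 1" using assms by (auto simp: power_le_one)
  have "Rk h (Suc k) = (1+h) * Rk h k + real k * (real k - 1)/2 * h^3" by (rule Rk_Suc)
  also have "\<dots> \<le> (1+h0) * ((h/h0)^3 * Rk h0 k) + real k * (real k - 1)/2 * h^3"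
    using Suc assms by (intro add_right_mono mult_mono) auto
  also have "\<dots> = (h/h0)^3 * Rk h0 (Suc k)"
    using assms by (simp add: Rk_Suc field_simps power3_eq_cube)
  finally show ?case using Suc assms nn by (simp add: Rk_Suc)
qed

lemma Rk_le_pow: "0 \<le> h \<Longrightarrow> Rk h k \<le> (1+h)^k"
proof -
  assume h: "0 \<le> h"
  have "0 \<le> real k * (real k - 1)" by (cases k) auto
  hence "0 \<le> 1 + real k * h + real k * (real k - 1) / 2 * h^2" using h by simp
  thus ?thesis unfolding Rk_def by simp
qed

lemma series_expand:
  fixes p :: "nat \<Rightarrow> real" and h0 :: real
  assumes p0: "\<And>k. 0 \<le> p k" and ps: "p sums 1" and h0: "0 < h0"
    and sm: "summable (\<lambda>k. p k * (1+h0)^k)"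
  shows "summable (\<lambda>k. real k * p k)" "summable (\<lambda>k. real k * (real k - 1) * p k)"
   and "\<And>h. 0 \<le> h \<Longrightarrow> h \<le> h0 \<Longrightarrow> summable (\<lambda>k. p k * (1+h)^k)"
   and "\<And>h. 0 \<le> h \<Longrightarrow> h \<le> h0 \<Longrightarrow> \<exists>R. (\<Sum>k. p k * (1+h)^k) = 1 + (\<Sum>k. real k * p k) * h
          + (\<Sum>k. real k*(real k - 1)*p k)/2 * h^2 + R \<and> 0 \<le> R \<and> R \<le> (h/h0)^3 * (\<Sum>k. p k * (1+h0)^k)"
proof -
  show s1: "summable (\<lambda>k. real k * p k)"
  proof (rule summable_comparison_test[OF _ summable_mult[OF sm, of "1/h0"]])
    show "\<exists>N. \<forall>n\<ge>N. norm (real n * p n) \<le> 1/h0 * (p n * (1+h0)^n)"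
    proof (intro exI allI impI)
      fix n :: nat
      have "1 + real n * h0 \<le> (1+h0)^n" using h0 by (intro Bernoulli_inequality) simp
      hence "real n * h0 \<le> (1+h0)^n" by simp
      hence "real n \<le> (1+h0)^n / h0" using h0 by (simp add: field_simps)
      hence "real n * p n \<le> (1+h0)^n / h0 * p n" using p0 by (intro mult_right_mono) auto
      thus "norm (real n * p n) \<le> 1/h0 * (p n * (1+h0)^n)" using p0 by (simp add: mult.commute)
    qed
  qed
  show s2: "summable (\<lambda>k. real k * (real k - 1) * p k)"
  proof (rule summable_comparison_test[OF _ summable_mult[OF sm, of "2/h0^2"]])
    show "\<exists>N. \<forall>n\<ge>N. norm (real n * (real n - 1) * p n) \<le> 2/h0^2 * (p n * (1+h0)^n)"
    proof (intro exI allI impI)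
      fix n :: nat
      have nn: "0 \<le> real n * (real n - 1)" by (cases n) auto
      have "0 \<le> Rk h0 n" using Rk_bounds[of h0 h0] h0 by auto
      hence "real n * (real n - 1) / 2 * h0^2 \<le> (1+h0)^n" using h0 mult_nonneg_nonneg[of "real n" h0] unfolding Rk_def by linarith
      hence "real n * (real n - 1) \<le> 2/h0^2 * (1+h0)^n" using h0 by (simp add: field_simps)
      hence "real n * (real n - 1) * p n \<le> 2/h0^2 * (1+h0)^n * p n" using p0 by (intro mult_right_mono) auto
      moreover have "0 \<le> real n * (real n - 1) * p n" using nn p0[of n] by simp
      ultimately show "norm (real n * (real n - 1) * p n) \<le> 2/h0^2 * (p n * (1+h0)^n)"
        by (simp add: ac_simps)
    qed
  qed
  fix h assume h: "0 \<le> h" "h \<le> h0"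
  have pw: "(1+h)^k \<le> (1+h0)^k" for k using h by (intro power_mono) auto
  show s3: "summable (\<lambda>k. p k * (1+h)^k)"
    by (rule summable_comparison_test[OF _ sm]) (use p0 pw h in \<open>auto intro!: mult_left_mono\<close>)
  have Rb: "0 \<le> Rk h k \<and> Rk h k \<le> (h/h0)^3 * Rk h0 k" for k using Rk_bounds h h0 by blast
  have t: "0 \<le> (h/h0)^3" "(h/h0)^3 \<le> 1" using h h0 by (auto simp: power_le_one)
  have Rle: "p k * Rk h k \<le> (h/h0)^3 * (p k * (1+h0)^k)" for k
  proof -
    have "Rk h k \<le> (h/h0)^3 * (1+h0)^k"
      using Rb[of k] Rk_le_pow[of h0 k] h0 t by (meson mult_left_mono order_trans less_imp_le)
    thus ?thesis using p0[of k] by (simp add: mult_left_mono algebra_simps)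
  qed
  have s4: "summable (\<lambda>k. p k * Rk h k)"
    by (rule summable_comparison_test[OF _ summable_mult[OF sm, of "(h/h0)^3"]])
       (use Rle Rb p0 in auto)
  define R where "R = (\<Sum>k. p k * Rk h k)"
  have "(\<lambda>k. p k + h * (real k * p k) + h^2/2 * (real k * (real k - 1) * p k) + p k * Rk h k)
      sums (1 + h * (\<Sum>k. real k * p k) + h^2/2 * (\<Sum>k. real k*(real k - 1)*p k) + R)"
    unfolding R_def
    by (intro sums_add sums_mult ps summable_sums s1 s2 s4)
  also have "(\<lambda>k. p k + h * (real k * p k) + h^2/2 * (real k * (real k - 1) * p k) + p k * Rk h k)
      = (\<lambda>k. p k * (1+h)^k)"
    by (rule ext) (simp add: Rk_def field_simps)
  finally have eq: "(\<Sum>k. p k * (1+h)^k) = 1 + h * (\<Sum>k. real k * p k) + h^2/2 * (\<Sum>k. real k*(real k - 1)*p k) + R"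
    by (simp add: sums_iff)
  have R0: "0 \<le> R" unfolding R_def using Rb p0 by (intro suminf_nonneg s4) auto
  have "R \<le> (\<Sum>k. (h/h0)^3 * (p k * (1+h0)^k))"
    unfolding R_def by (intro suminf_le Rle s4 summable_mult sm)
  also have "\<dots> = (h/h0)^3 * (\<Sum>k. p k * (1+h0)^k)" by (rule suminf_mult[OF sm])
  finally show "\<exists>R. (\<Sum>k. p k * (1+h)^k) = 1 + (\<Sum>k. real k * p k) * h
          + (\<Sum>k. real k*(real k - 1)*p k)/2 * h^2 + R \<and> 0 \<le> R \<and> R \<le> (h/h0)^3 * (\<Sum>k. p k * (1+h0)^k)"
    using eq R0 by (intro exI[of _ R]) (simp add: algebra_simps)
qed

lemma log_expand_pt:
  fixes \<mu> d2 M h0 B h R :: real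
  assumes mu: "0 < \<mu>" and d2: "0 \<le> d2" and M: "0 \<le> M" and h0: "0 < h0"
    and B: "B = \<mu> + d2 * h0 / 2 + M * h0^2"
    and h: "0 \<le> h" "h \<le> h0" "B * h \<le> 1"
    and R: "0 \<le> R" "R \<le> M * h^3"
  shows "\<bar>ln (1 + (\<mu> * h + d2/2 * h^2 + R)) - \<mu> * h - (d2 - \<mu>^2)/2 * h^2\<bar>
          \<le> (M + (d2/2 + M*h0) * B + B^3) * h^3"
proof -
  define v where "v = d2/2 * h^2 + R"
  define w where "w = \<mu> * h + v"
  have v0: "0 \<le> v" unfolding v_def using d2 R by simp
  have h2: "h^2 \<le> h0 * h" using h by (simp add: power2_eq_square mult_right_mono)
  have h3: "h^3 \<le> h0^2 * h"
  proof -
    have "h^3 = h^2 * h" by (simp add: power3_eq_cube power2_eq_square)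
    also have "\<dots> \<le> (h0*h) * h" using h2 h by (intro mult_right_mono) auto
    also have "\<dots> \<le> (h0*h0) * h" using h by (intro mult_right_mono mult_left_mono) auto
    finally show ?thesis by (simp add: power2_eq_square)
  qed
  have h3': "h^3 = h^2 * h" by (simp add: power3_eq_cube power2_eq_square)
  have vle: "v \<le> (d2/2 + M*h0) * h^2"
  proof -
    have "h^2 * h \<le> h^2 * h0" using h by (intro mult_left_mono) auto
    hence "M * h^3 \<le> M * (h0 * h^2)" using M unfolding h3'
      by (intro mult_left_mono) (auto simp: mult.commute)
    thus ?thesis unfolding v_def using R by (simp add: algebra_simps)
  qed
  have wle: "w \<le> B * h"
  proof -
    have "v \<le> (d2/2 + M*h0) * (h0 * h)" using vle h2 d2 M h0
      by (meson order_trans mult_left_mono add_nonneg_nonneg divide_nonneg_pos mult_nonneg_nonneg less_imp_le zero_less_numeral)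
    thus ?thesis unfolding w_def B using h0 by (simp add: algebra_simps power2_eq_square)
  qed
  have w0: "0 \<le> w" unfolding w_def using mu h v0 by simp
  have ln: "\<bar>ln (1+w) - (w - w^2/2)\<bar> \<le> w^3" by (rule ln_abs3[OF w0])
  have w3: "w^3 \<le> B^3 * h^3"
    using power_mono[OF wle w0, of 3] by (simp add: power_mult_distrib)
  have eqn: "w^2 - \<mu>^2 * h^2 = v * (w + \<mu> * h)" unfolding w_def by (simp add: algebra_simps power2_eq_square)
  have wmu: "w + \<mu> * h \<le> 2 * (B * h)"
  proof -
    have "\<mu> * h \<le> w" unfolding w_def using v0 by simp
    thus ?thesis using wle by simp
  qed
  have "0 \<le> v * (w + \<mu> * h)" using v0 w0 mu h by simp
  have vw: "v * (w + \<mu> * h) \<le> (d2/2 + M*h0) * h^2 * (2 * (B * h))"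
    using vle wmu v0 w0 mu h by (intro mult_mono) auto
  have "ln (1 + (\<mu> * h + d2/2 * h^2 + R)) - \<mu> * h - (d2 - \<mu>^2)/2 * h^2
        = (ln (1+w) - (w - w^2/2)) + R - (w^2 - \<mu>^2*h^2)/2"
    unfolding w_def v_def by (simp add: field_simps power2_eq_square)
  also have "\<dots> = (ln (1+w) - (w - w^2/2)) + R - v * (w + \<mu> * h)/2" by (simp add: eqn)
  finally have e: "ln (1 + (\<mu> * h + d2/2 * h^2 + R)) - \<mu> * h - (d2 - \<mu>^2)/2 * h^2
        = (ln (1+w) - (w - w^2/2)) + R - v * (w + \<mu> * h)/2" .
  have "\<bar>(ln (1+w) - (w - w^2/2)) + R - v * (w + \<mu> * h)/2\<bar>
      \<le> \<bar>ln (1+w) - (w - w^2/2)\<bar> + R + v * (w + \<mu> * h)/2"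
    using R \<open>0 \<le> v * (w + \<mu> * h)\<close> by linarith
  also have "\<dots> \<le> B^3 * h^3 + M * h^3 + (d2/2 + M*h0) * B * h^3"
  proof -
    have "(d2/2 + M*h0) * h^2 * (2 * (B * h)) / 2 = (d2/2 + M*h0) * B * h^3"
      by (simp add: power2_eq_square power3_eq_cube)
    hence "v * (w + \<mu> * h)/2 \<le> (d2/2 + M*h0) * B * h^3" using vw by linarith
    thus ?thesis using ln w3 R by linarith
  qed
  finally show ?thesis using e by (simp add: algebra_simps)
qed

lemma F_approx:
  fixes \<mu> c K h1 \<gamma>2 \<gamma> \<delta> :: real and s n :: nat and \<Phi> :: "real \<Rightarrow> real"
  assumes mu: "0 < \<mu>" and K: "0 \<le> K"
    and Phi: "\<bar>\<Phi> \<delta> - \<mu>*\<delta> - c*\<delta>^2\<bar> \<le> K*\<delta>^3"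
    and s: "0 < s" and nmu: "real n * \<mu> < real s"
    and g: "\<gamma> = (1 - real n * \<mu> / real s) * sqrt (real s)" "\<gamma> \<le> \<gamma>2"
    and d: "0 \<le> \<delta>"
  shows "\<bar>real s * ln (1+\<delta>) - real n * \<Phi> \<delta> - (\<gamma> * sqrt (real s) * \<delta> - (1/2 + c/\<mu>) * real s * \<delta>^2)\<bar>
     \<le> (\<bar>c\<bar> * \<gamma>2/\<mu> + 1 + K/\<mu>) * (sqrt (real s) * \<delta>^2 + real s * \<delta>^3)"
proof -
  define e1 where "e1 = ln (1+\<delta>) - (\<delta> - \<delta>^2/2)"
  define e2 where "e2 = \<Phi> \<delta> - \<mu>*\<delta> - c*\<delta>^2"
  have e1: "\<bar>e1\<bar> \<le> \<delta>^3" unfolding e1_def by (rule ln_abs3[OF d])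
  have e2: "\<bar>e2\<bar> \<le> K*\<delta>^3" unfolding e2_def by (rule Phi)
  have gs: "\<gamma> * sqrt (real s) = real s - real n * \<mu>"
    using s unfolding g by (simp add: field_simps)
  have g0: "0 \<le> \<gamma>" using nmu s unfolding g by (simp add: field_simps)
  have nle: "real n \<le> real s / \<mu>" using nmu mu by (simp add: field_simps)
  have eq: "real s * ln (1+\<delta>) - real n * \<Phi> \<delta> - (\<gamma> * sqrt (real s) * \<delta> - (1/2 + c/\<mu>) * real s * \<delta>^2)
     = real s * e1 - real n * e2 + (c/\<mu>) * (\<gamma> * sqrt (real s)) * \<delta>^2"
    unfolding e1_def e2_def gs using mu by (simp add: field_simps power2_eq_square)
  have d2: "0 \<le> \<delta>^2" "0 \<le> \<delta>^3" using d by auto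
  have b1: "\<bar>real s * e1\<bar> \<le> real s * \<delta>^3" using e1 by (simp add: abs_mult mult_left_mono)
  have b2: "\<bar>real n * e2\<bar> \<le> K/\<mu> * (real s * \<delta>^3)"
  proof -
    have "\<bar>real n * e2\<bar> \<le> real n * (K*\<delta>^3)" using e2 by (simp add: abs_mult mult_left_mono)
    also have "\<dots> \<le> (real s / \<mu>) * (K*\<delta>^3)" using nle K d2 by (intro mult_right_mono) auto
    finally show ?thesis by (simp add: field_simps)
  qed
  have b3: "\<bar>(c/\<mu>) * (\<gamma> * sqrt (real s)) * \<delta>^2\<bar> \<le> \<bar>c\<bar> * \<gamma>2/\<mu> * (sqrt (real s) * \<delta>^2)"
  proof -
    have "\<bar>(c/\<mu>) * (\<gamma> * sqrt (real s)) * \<delta>^2\<bar> = \<bar>c\<bar>/\<mu> * \<gamma> * (sqrt (real s) * \<delta>^2)"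
      using mu g0 d2 by (simp add: abs_mult)
    also have "\<dots> \<le> \<bar>c\<bar>/\<mu> * \<gamma>2 * (sqrt (real s) * \<delta>^2)"
      using g mu d2 by (intro mult_right_mono mult_left_mono) auto
    finally show ?thesis by simp
  qed
  have "\<bar>real s * e1 - real n * e2 + (c/\<mu>) * (\<gamma> * sqrt (real s)) * \<delta>^2\<bar>
     \<le> real s * \<delta>^3 + K/\<mu> * (real s * \<delta>^3) + \<bar>c\<bar> * \<gamma>2/\<mu> * (sqrt (real s) * \<delta>^2)"
    using b1 b2 b3 by linarith
  also have "\<dots> \<le> (\<bar>c\<bar> * \<gamma>2/\<mu> + 1 + K/\<mu>) * (sqrt (real s) * \<delta>^2 + real s * \<delta>^3)"
  proof -
    have A: "0 \<le> \<bar>c\<bar> * \<gamma>2/\<mu>" using mu g0 g by auto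
    have B: "0 \<le> K/\<mu>" using mu K by auto
    have C: "0 \<le> sqrt (real s) * \<delta>^2" "0 \<le> real s * \<delta>^3" using d2 by auto
    have "real s * \<delta>^3 + K/\<mu> * (real s * \<delta>^3) + \<bar>c\<bar> * \<gamma>2/\<mu> * (sqrt (real s) * \<delta>^2)
       \<le> real s * \<delta>^3 + K/\<mu> * (real s * \<delta>^3) + \<bar>c\<bar> * \<gamma>2/\<mu> * (sqrt (real s) * \<delta>^2)
          + (\<bar>c\<bar> * \<gamma>2/\<mu>) * (real s * \<delta>^3) + 1 * (sqrt (real s) * \<delta>^2) + K/\<mu> * (sqrt (real s) * \<delta>^2)"
      using mult_nonneg_nonneg[OF A C(2)] mult_nonneg_nonneg[OF B C(1)] C by simp
    thus ?thesis by (simp add: algebra_simps)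
  qed
  finally show ?thesis using eq by simp
qed

lemma core_pos:
  fixes a D \<gamma> \<gamma>1 q \<delta> v :: real
  assumes a: "0 < a" and D: "0 \<le> D" and g: "0 < \<gamma>1" "\<gamma>1 \<le> \<gamma>" and q: "1 \<le> q"
    and v: "\<bar>v - (\<gamma>*q*\<delta> - a*q^2*\<delta>^2)\<bar> \<le> D*(q*\<delta>^2 + q^2*\<delta>^3)"
    and d: "0 < \<delta>" "q*\<delta> \<le> min 1 (\<gamma>1/(2*(a+2*D)))"
  shows "0 < v"
proof -
  define u where "u = q*\<delta>"
  have u0: "0 < u" using d q unfolding u_def by simp
  have u1: "u \<le> 1" and u2: "u \<le> \<gamma>1/(2*(a+2*D))" using d unfolding u_def by auto
  have du: "\<delta> \<le> u" unfolding u_def using q d by (simp add: mult_right_mono[of 1 q \<delta>, simplified])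
  have "(a+2*D)*u \<le> \<gamma>1/2" using u2 a D by (simp add: field_simps)
  moreover have "D*\<delta> \<le> D*u" using du D by (simp add: mult_left_mono)
  moreover have "D*u*\<delta> \<le> D*u" using du u1 D u0 
    by (metis mult_left_le mult_left_mono less_imp_le order_trans mult_nonneg_nonneg)
  ultimately have key: "0 < \<gamma> - a*u - D*\<delta> - D*u*\<delta>" using g by (simp add: algebra_simps)
  have "v \<ge> \<gamma>*q*\<delta> - a*q^2*\<delta>^2 - D*(q*\<delta>^2 + q^2*\<delta>^3)" using v by linarith
  also have "\<gamma>*q*\<delta> - a*q^2*\<delta>^2 - D*(q*\<delta>^2 + q^2*\<delta>^3) = u * (\<gamma> - a*u - D*\<delta> - D*u*\<delta>)"
    unfolding u_def by (simp add: algebra_simps power2_eq_square power3_eq_cube)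
  finally show ?thesis using key u0 by (smt (verit) mult_pos_pos)
qed

lemma core_neg:
  fixes a D \<gamma> \<gamma>2 q v :: real
  assumes a: "0 < a" and D: "0 \<le> D" and g: "0 < \<gamma>" "\<gamma> \<le> \<gamma>2" and q: "1 \<le> q"
    and qb: "D*(2*\<gamma>2/a + (2*\<gamma>2/a)^2)/\<gamma>2 < q"
    and v: "\<bar>v - (\<gamma>*q*((2*\<gamma>2/a)/q) - a*q^2*((2*\<gamma>2/a)/q)^2)\<bar>
              \<le> D*(q*((2*\<gamma>2/a)/q)^2 + q^2*((2*\<gamma>2/a)/q)^3)"
  shows "v < 0"
proof -
  define u where "u = 2*\<gamma>2/a"
  have g2: "0 < \<gamma>2" using g by simp
  have u0: "0 < u" unfolding u_def using a g2 by simp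
  have q0: "0 < q" using q by simp
  have e1: "\<gamma>*q*(u/q) - a*q^2*(u/q)^2 = u*\<gamma> - a*u^2" using q0 by (simp add: field_simps power2_eq_square)
  have e2: "D*(q*(u/q)^2 + q^2*(u/q)^3) = D*(u^2 + u^3)/q" using q0
    by (simp add: field_simps power2_eq_square power3_eq_cube)
  have e3: "u*\<gamma> - a*u^2 = u*(\<gamma> - 2*\<gamma>2)" unfolding u_def using a by (simp add: field_simps power2_eq_square)
  have "D*(u + u^2)/\<gamma>2 < q" using qb unfolding u_def .
  hence "D*(u + u^2) < q*\<gamma>2" using g2 by (simp add: field_simps)
  hence "u * (D*(u + u^2)) < u * (q*\<gamma>2)" using u0 by simp
  hence "D*(u^2 + u^3) < u*\<gamma>2*q" by (simp add: algebra_simps power2_eq_square power3_eq_cube)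
  hence lt: "D*(u^2 + u^3)/q < u*\<gamma>2" using q0 by (simp add: field_simps)
  have "u*(\<gamma> - 2*\<gamma>2) \<le> - (u*\<gamma>2)" using u0 g by (simp add: algebra_simps mult_left_mono)
  hence "v \<le> - (u*\<gamma>2) + D*(u^2 + u^3)/q" using v e1 e2 e3 unfolding u_def[symmetric] by linarith
  thus ?thesis using lt by simp
qed

lemma core_root:
  fixes a D \<gamma> q \<delta> ustar :: real
  assumes a: "0 < a" and D: "0 \<le> D" and q: "1 \<le> q"
    and v: "\<bar>0 - (\<gamma>*q*\<delta> - a*q^2*\<delta>^2)\<bar> \<le> D*(q*\<delta>^2 + q^2*\<delta>^3)"
    and d: "0 < \<delta>" "q*\<delta> \<le> ustar"
  shows "\<bar>\<gamma> - a*(q*\<delta>)\<bar> \<le> D*(ustar + ustar^2)/q"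
proof -
  define u where "u = q*\<delta>"
  have q0: "0 < q" using q by simp
  have u0: "0 < u" unfolding u_def using q0 d by simp
  define Z where "Z = D*(u + u^2)/q"
  have "\<bar>u * (\<gamma> - a*u)\<bar> \<le> u * Z"
  proof -
    have "\<gamma>*q*\<delta> - a*q^2*\<delta>^2 = u * (\<gamma> - a*u)" unfolding u_def by (simp add: algebra_simps power2_eq_square)
    moreover have "D*(q*\<delta>^2 + q^2*\<delta>^3) = u * Z" unfolding Z_def u_def using q0
      by (simp add: field_simps power2_eq_square power3_eq_cube)
    ultimately show ?thesis using v by simp
  qed
  hence "u * \<bar>\<gamma> - a*u\<bar> \<le> u * Z" using u0 by (simp add: abs_mult)
  hence "\<bar>\<gamma> - a*u\<bar> \<le> D*(u + u^2)/q" using u0 unfolding Z_def by (simp only: mult_le_cancel_left_pos)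
  also have "\<dots> \<le> D*(ustar + ustar^2)/q"
  proof -
    have "u^2 \<le> ustar^2" using u0 d unfolding u_def by (intro power_mono) auto
    hence "D*(u + u^2) \<le> D*(ustar + ustar^2)" using D d unfolding u_def by (intro mult_left_mono) auto
    thus ?thesis using q0 by (simp add: divide_right_mono)
  qed
  finally show ?thesis unfolding u_def .
qed

lemma exp_sub1: "\<bar>exp (x::real) - 1\<bar> \<le> \<bar>x\<bar> * exp \<bar>x\<bar>"
proof (cases "x \<ge> 0")
  case True
  have "1 - x \<le> exp (-x)" using exp_ge_add_one_self[of "-x"] by simp
  hence "(1 - x) * exp x \<le> exp (-x) * exp x" by (simp add: mult_right_mono)
  hence "(1-x) * exp x \<le> 1" by (simp add: exp_minus field_simps)
  moreover have "1 \<le> exp x" using True by simp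
  ultimately show ?thesis using True by (simp add: algebra_simps)
next
  case False
  have a1: "1 + x \<le> exp x" by (rule exp_ge_add_one_self)
  have a2: "exp x \<le> 1" using False by simp
  have "\<bar>exp x - 1\<bar> \<le> \<bar>x\<bar> * 1" using False a1 a2 by linarith
  also have "\<dots> \<le> \<bar>x\<bar> * exp \<bar>x\<bar>" by (intro mult_left_mono) auto
  finally show ?thesis .
qed

lemma pow_ln_eq: "0 < (x::real) \<Longrightarrow> 0 < y \<Longrightarrow> (x^s = y^n) \<longleftrightarrow> real s * ln x = real n * ln y"
  by (metis ln_inj_iff ln_realpow zero_less_power)

lemma pow_ln_less: "0 < (x::real) \<Longrightarrow> 0 < y \<Longrightarrow> (x^s < y^n) \<longleftrightarrow> real s * ln x < real n * ln y"
  by (metis ln_less_cancel_iff ln_realpow zero_less_power)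

lemma pmf_sums_1: "pmf X sums 1"
proof -
  have "pmf X sums infsetsum (pmf X) UNIV" by (rule sums_infsetsum_nat'[OF pmf_abs_summable])
  thus ?thesis by (simp add: infsetsum_pmf_eq_1)
qed

lemma pgf_summable:
  assumes "0 \<le> x" "ereal x < pgf_radius X"
  shows "summable (\<lambda>k. pmf X k * x^k)"
proof -
  have "summable (\<lambda>k. norm (complex_of_real (pmf X k) * complex_of_real x ^ k))"
    by (rule abs_summable_in_conv_radius) (use assms in \<open>simp add: pgf_radius_def\<close>)
  moreover have "norm (complex_of_real (pmf X k) * complex_of_real x ^ k) = pmf X k * x^k" for k
    using assms by (simp add: norm_mult norm_power)
  ultimately show ?thesis by simp
qed

lemma pgf_of_real:
  assumes "0 \<le> x" "ereal x < pgf_radius X"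
  shows "pgf X (complex_of_real x) = complex_of_real (pgf_real X x)"
proof -
  have "complex_of_real (pgf_real X x) = (\<Sum>k. complex_of_real (pmf X k * x^k))"
    unfolding pgf_real_def by (rule suminf_of_real[OF pgf_summable[OF assms]])
  thus ?thesis unfolding pgf_def by simp
qed

lemma pgf_real_ge1:
  assumes "1 \<le> x" "ereal x < pgf_radius X"
  shows "1 \<le> pgf_real X x"
proof -
  have "1 = (\<Sum>k. pmf X k)" using pmf_sums_1 by (simp add: sums_iff)
  also have "\<dots> \<le> (\<Sum>k. pmf X k * x^k)"
    using pgf_summable[of x X] assms pmf_sums_1
  proof (intro suminf_le)
    fix k
    have "pmf X k * 1 \<le> pmf X k * x^k" using assms by (intro mult_left_mono one_le_power) auto
    thus "pmf X k \<le> pmf X k * x^k" by simp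
  qed (auto simp: sums_iff)
  finally show ?thesis unfolding pgf_real_def .
qed

lemma pgf_real_cont:
  assumes "0 \<le> x" "x < z" "ereal z < pgf_radius X"
  shows "isCont (pgf_real X) x"
proof -
  have "isCont (\<lambda>x. \<Sum>k. pmf X k * x^k) x"
    by (rule isCont_powser[OF pgf_summable[of z X]]) (use assms in auto)
  thus ?thesis unfolding pgf_real_def[abs_def] .
qed

theorem proposition3p2:
  fixes X :: "nat pmf"
    and \<gamma>1 \<gamma>2 L1 L2 :: real
  assumes radius: "pgf_radius X > 1"
    and mean_pos: "pgf_d1 X > 0"
    and var_pos: "pgf_var X > 0"
    and strict_max: "\<And>r1 z. 0 < r1 \<Longrightarrow> ereal r1 < pgf_radius X \<Longrightarrow> cmod z = r1 \<Longrightarrow>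
                        z \<noteq> complex_of_real r1 \<Longrightarrow> cmod (pgf X z) < pgf_real X r1"
    and \<gamma>_bounds: "0 < \<gamma>1" "\<gamma>1 \<le> \<gamma>2"
    and L_bounds: "0 < L1" "L1 \<le> L2"
  shows "\<exists>C S0. \<forall>(s::nat) (n::nat) (N::nat) (Z0::complex).
     (let \<mu> = pgf_d1 X; \<sigma>2 = pgf_var X;
          \<gamma> = (1 - real n * \<mu> / real s) * sqrt (real s);
          L = real (N + 1) / sqrt (real s)
      in s \<ge> S0 \<and> 0 < s \<and> 0 < n \<and> real n * \<mu> < real s
         \<and> (\<exists>k. real k > real s / real n \<and> pmf X k \<noteq> 0)
         \<and> \<gamma>1 \<le> \<gamma> \<and> \<gamma> \<le> \<gamma>2 \<and> L1 \<le> L \<and> L \<le> L2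
         \<and> 1 < cmod Z0 \<and> ereal (cmod Z0) < pgf_radius X \<and> Z0 ^ s = pgf X Z0 ^ n
         \<and> (\<forall>z. 1 < cmod z \<and> ereal (cmod z) < pgf_radius X \<and> z ^ s = pgf X z ^ n
                 \<longrightarrow> cmod Z0 \<le> cmod z)
      \<longrightarrow> cmod (1 / Z0 ^ (N + 1) - complex_of_real (exp (- 2 * L * \<gamma> * \<mu> / \<sigma>2)))
            \<le> C * exp (- 2 * L * \<gamma> * \<mu> / \<sigma>2) / sqrt (real s))"
proof -
  define \<mu> where "\<mu> = pgf_d1 X"
  define d2 where "d2 = pgf_d2 X"
  define \<sigma>2 where "\<sigma>2 = pgf_var X"
  have mu: "0 < \<mu>" using mean_pos unfolding \<mu>_def .
  have sig: "0 < \<sigma>2" using var_pos unfolding \<sigma>2_def .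
  have sig_eq: "\<sigma>2 = d2 - \<mu>^2 + \<mu>" unfolding \<sigma>2_def d2_def \<mu>_def pgf_var_def ..
  obtain z where z: "1 < ereal z" "ereal z < pgf_radius X" using ereal_dense2[OF radius] by blast
  have z1: "1 < z" using z(1) by simp
  define h0 where "h0 = (z - 1)/2"
  have h0: "0 < h0" using z1 unfolding h0_def by simp
  have h0z: "1 + h0 < z" using z1 unfolding h0_def by (simp add: field_simps)
  have rad: "\<And>x. x \<le> z \<Longrightarrow> ereal x < pgf_radius X" using z(2) by (meson ereal_less_eq(3) order.strict_trans1)
  have sm0: "summable (\<lambda>k. pmf X k * (1+h0)^k)"
    by (rule pgf_summable) (use h0 h0z rad in auto)
  note SE = series_expand[of "pmf X", OF pmf_nonneg pmf_sums_1 h0 sm0]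
  define S where "S = pgf_real X (1+h0)"
  define M where "M = S / h0^3"
  have S0: "0 \<le> S" unfolding S_def pgf_real_def using sm0 h0
    by (intro suminf_nonneg) auto
  have M0: "0 \<le> M" unfolding M_def using S0 h0 by simp
  have d2_0: "0 \<le> d2" unfolding d2_def pgf_d2_def
  proof (rule suminf_nonneg[OF SE(2)])
    fix k
    have "0 \<le> real k * (real k - 1)" by (cases k) auto
    thus "0 \<le> real k * (real k - 1) * pmf X k" by simp
  qed
  have expand: "\<exists>R. pgf_real X (1+h) = 1 + \<mu>*h + d2/2*h^2 + R \<and> 0 \<le> R \<and> R \<le> M*h^3"
    if hh: "0 \<le> h" "h \<le> h0" for h
  proof -
    obtain R where R: "(\<Sum>k. pmf X k * (1+h)^k) = 1 + (\<Sum>k. real k * pmf X k) * h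
          + (\<Sum>k. real k*(real k - 1)*pmf X k)/2 * h^2 + R" "0 \<le> R" "R \<le> (h/h0)^3 * (\<Sum>k. pmf X k * (1+h0)^k)"
      using SE(4)[OF hh] by blast
    have "(h/h0)^3 * (\<Sum>k. pmf X k * (1+h0)^k) = M*h^3"
      unfolding M_def S_def pgf_real_def by (simp add: power_divide)
    thus ?thesis using R unfolding pgf_real_def \<mu>_def d2_def pgf_d1_def pgf_d2_def
      by (intro exI[of _ R]) (simp add: algebra_simps)
  qed
  define B where "B = \<mu> + d2 * h0 / 2 + M * h0^2"
  have B0: "0 < B" unfolding B_def using mu d2_0 M0 h0 by (simp add: add_pos_nonneg)
  define h1 where "h1 = min h0 (min 1 (1/B))"
  have h1: "0 < h1" "h1 \<le> h0" "h1 \<le> 1" "h1 \<le> 1/B" unfolding h1_def using h0 B0 by auto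
  define c where "c = (d2 - \<mu>^2)/2"
  define K where "K = M + (d2/2 + M*h0) * B + B^3"
  have K0: "0 \<le> K" unfolding K_def using M0 d2_0 h0 B0 by simp
  define P where "P = (\<lambda>\<delta>. pgf_real X (1+\<delta>))"
  have Phi: "1 \<le> P \<delta> \<and> \<bar>ln (P \<delta>) - \<mu>*\<delta> - c*\<delta>^2\<bar> \<le> K*\<delta>^3" if dd: "0 \<le> \<delta>" "\<delta> \<le> h1" for \<delta>
  proof -
    have d0: "\<delta> \<le> h0" using dd h1 by simp
    obtain R where R: "P \<delta> = 1 + \<mu>*\<delta> + d2/2*\<delta>^2 + R" "0 \<le> R" "R \<le> M*\<delta>^3"
      using expand[OF dd(1) d0] unfolding P_def by blast
    have "B * \<delta> \<le> B * h1" using dd B0 by (intro mult_left_mono) auto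
    moreover have "B * h1 \<le> 1" using h1 B0 by (simp add: field_simps)
    ultimately have Bd: "B * \<delta> \<le> 1" by simp
    have "\<bar>ln (1 + (\<mu> * \<delta> + d2/2 * \<delta>^2 + R)) - \<mu> * \<delta> - (d2 - \<mu>^2)/2 * \<delta>^2\<bar>
          \<le> (M + (d2/2 + M*h0) * B + B^3) * \<delta>^3"
      by (rule log_expand_pt[OF mu d2_0 M0 h0 B_def dd(1) d0 Bd R(2) R(3)])
    moreover have "1 \<le> P \<delta>" using R mu dd d2_0 by simp
    ultimately show ?thesis using R(1) unfolding c_def K_def by (simp add: add.assoc)
  qed
  have Pcont: "isCont P \<delta>" if "0 \<le> \<delta>" "\<delta> \<le> h1" for \<delta>
  proof -
    have "isCont (pgf_real X) (1+\<delta>)" by (rule pgf_real_cont[OF _ _ z(2)]) (use that h1 h0z in auto)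
    thus ?thesis unfolding P_def by (intro isCont_o2[where g = "pgf_real X" and f = "\<lambda>\<delta>. 1+\<delta>"]) auto
  qed
  have Fcont: "continuous_on {0..h1} (\<lambda>\<delta>. real s * ln (1+\<delta>) - real n * ln (P \<delta>))" for s n :: nat
  proof (intro continuous_at_imp_continuous_on ballI)
    fix \<delta> assume "\<delta> \<in> {0..h1}"
    hence d: "0 \<le> \<delta>" "\<delta> \<le> h1" by auto
    have "P \<delta> \<noteq> 0" using Phi[OF d] by auto
    thus "isCont (\<lambda>\<delta>. real s * ln (1+\<delta>) - real n * ln (P \<delta>)) \<delta>"
      using Pcont[OF d] d by (auto intro!: continuous_intros)
  qed
  define a where "a = \<sigma>2/(2*\<mu>)"
  have a0: "0 < a" unfolding a_def using sig mu by simp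
  have a_eq: "a = 1/2 + c/\<mu>" unfolding a_def c_def sig_eq using mu by (simp add: field_simps)
  define D where "D = \<bar>c\<bar> * \<gamma>2/\<mu> + 1 + K/\<mu>"
  have D0: "0 \<le> D" unfolding D_def using mu K0 \<gamma>_bounds by simp
  define ustar where "ustar = 2*\<gamma>2/a"
  define u0 where "u0 = min 1 (\<gamma>1/(2*(a+2*D)))"
  define Q where "Q = 1 + ustar/h1 + D*(ustar+ustar^2)/\<gamma>2"
  define E0 where "E0 = L2 * ustar^2 + L2/a * (D*(ustar+ustar^2))"

  have ust0: "0 < ustar" unfolding ustar_def using a0 \<gamma>_bounds by simp
  have u00: "0 < u0" unfolding u0_def using \<gamma>_bounds a0 D0 by simp
  have u0_le: "u0 \<le> ustar"
  proof -
    have "u0 \<le> \<gamma>1/(2*(a+2*D))" unfolding u0_def by simp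
    also have "\<dots> \<le> \<gamma>1/(2*a)" using a0 D0 \<gamma>_bounds by (intro divide_left_mono) auto
    also have "\<dots> \<le> ustar" unfolding ustar_def using a0 \<gamma>_bounds by (simp add: field_simps)
    finally show ?thesis .
  qed
  have Q1: "1 \<le> Q" unfolding Q_def using ust0 h1 D0 \<gamma>_bounds by simp
  have main: "cmod (1 / Z0 ^ (N + 1) - complex_of_real (exp (- 2 * L * \<gamma> * \<mu> / \<sigma>2)))
            \<le> E0 * exp E0 * exp (- 2 * L * \<gamma> * \<mu> / \<sigma>2) / sqrt (real s)"
    if g_def: "\<gamma> = (1 - real n * \<mu> / real s) * sqrt (real s)"
      and L_def: "L = real (N + 1) / sqrt (real s)"
      and sS: "nat \<lceil>Q^2\<rceil> \<le> s" and s0: "0 < s" and n0: "0 < n" and nmu: "real n * \<mu> < real s"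
      and g1: "\<gamma>1 \<le> \<gamma>" and g2: "\<gamma> \<le> \<gamma>2" and L1: "L1 \<le> L" and L2: "L \<le> L2"
      and Z1: "1 < cmod Z0" and Zr: "ereal (cmod Z0) < pgf_radius X" and Zroot: "Z0 ^ s = pgf X Z0 ^ n"
      and Zmin: "\<forall>z. 1 < cmod z \<and> ereal (cmod z) < pgf_radius X \<and> z ^ s = pgf X z ^ n
                 \<longrightarrow> cmod Z0 \<le> cmod z"
    for \<gamma> L :: real and s n N :: nat and Z0 :: complex
  proof -
    define q where "q = sqrt (real s)"
    have qQ: "Q \<le> q"
    proof -
      have "Q^2 \<le> real s" using sS by linarith
      hence "sqrt (Q^2) \<le> q" unfolding q_def by (rule real_sqrt_le_mono)
      thus ?thesis using Q1 by simp
    qed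
    have q1: "1 \<le> q" using qQ Q1 by simp
    have q0: "0 < q" using q1 by simp
    have qsq: "q^2 = real s" unfolding q_def by simp
    define F where "F = (\<lambda>\<delta>. real s * ln (1+\<delta>) - real n * ln (P \<delta>))"
    have approx: "\<bar>F \<delta> - (\<gamma>*q*\<delta> - a*q^2*\<delta>^2)\<bar> \<le> D*(q*\<delta>^2 + q^2*\<delta>^3)"
      if "0 \<le> \<delta>" "\<delta> \<le> h1" for \<delta>
      using F_approx[of \<mu> K "\<lambda>\<delta>. ln (P \<delta>)" \<delta> c s n \<gamma> \<gamma>2, OF mu K0 _ s0 nmu g_def g2 that(1)]
        Phi[OF that]
      unfolding F_def D_def a_eq[symmetric] q_def[symmetric] qsq by simp
    have cont: "continuous_on {x..y} F" if "0 \<le> x" "y \<le> h1" for x y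
      using continuous_on_subset[OF Fcont[of s n]] that unfolding F_def by auto
    have realroot: "cmod Z0 \<le> 1 + \<delta>" if "0 < \<delta>" "\<delta> \<le> h1" "F \<delta> = 0" for \<delta>
    proof -
      have Pp: "0 < P \<delta>" using Phi[of \<delta>] that by auto
      have "(1+\<delta>)^s = P \<delta> ^ n" using that(3) Pp that(1) unfolding F_def
        by (subst pow_ln_eq) auto
      note eq = this
      have pe: "pgf X (complex_of_real (1+\<delta>)) = complex_of_real (P \<delta>)"
        unfolding P_def by (rule pgf_of_real) (use that h1 h0z rad in auto)
      have "complex_of_real (1+\<delta>) ^ s = pgf X (complex_of_real (1+\<delta>)) ^ n"
        by (simp only: pe of_real_power[symmetric] eq)
      moreover have "ereal (1+\<delta>) < pgf_radius X" using rad that h1 h0z by simp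
      moreover have "cmod (complex_of_real (1+\<delta>)) = 1 + \<delta>" using that by (simp only: norm_of_real abs_of_pos)
      ultimately show ?thesis using Zmin[rule_format, of "complex_of_real (1+\<delta>)"] that by simp
    qed
    define da where "da = u0/q"
    define db where "db = ustar/q"
    have da0: "0 < da" unfolding da_def using u00 q0 by simp
    have dadb: "da \<le> db" unfolding da_def db_def using u0_le q0 by (simp add: divide_right_mono)
    have dbh1: "db \<le> h1"
    proof -
      have "0 \<le> D*(ustar+ustar^2)/\<gamma>2" using D0 \<gamma>_bounds ust0 by simp
      hence "ustar/h1 \<le> q" using qQ unfolding Q_def by linarith
      thus ?thesis unfolding db_def using h1 q0 by (simp add: field_simps)
    qed
    have Fpos: "0 < F \<delta>" if "0 < \<delta>" "\<delta> \<le> da" for \<delta>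
    proof (rule core_pos[OF a0 D0 \<gamma>_bounds(1) g1 q1 approx])
      show "0 \<le> \<delta>" "\<delta> \<le> h1" "0 < \<delta>" using that dadb dbh1 by auto
      have "q*\<delta> \<le> q*da" using that q0 by simp
      thus "q*\<delta> \<le> min 1 (\<gamma>1/(2*(a+2*D)))" unfolding da_def u0_def[symmetric] using q0 by simp
    qed
    have Fneg: "F db < 0"
    proof -
      have qb: "D*(2*\<gamma>2/a + (2*\<gamma>2/a)^2)/\<gamma>2 < q" using qQ unfolding Q_def ustar_def
        using ust0 h1 unfolding ustar_def by (smt (verit) divide_pos_pos)
      show ?thesis
        by (rule core_neg[OF a0 D0 _ g2 q1 qb])
           (use approx[of db] dadb da0 dbh1 g1 \<gamma>_bounds in \<open>auto simp: db_def ustar_def\<close>)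
    qed
    obtain dr where dr: "da \<le> dr" "dr \<le> db" "F dr = 0"
      using IVT2'[of F db 0 da] Fneg Fpos[OF da0 order_refl] dadb cont[of da db] da0 dbh1 by force
    define \<rho> where "\<rho> = cmod Z0"
    define d\<rho> where "d\<rho> = \<rho> - 1"
    have drho0: "0 < d\<rho>" unfolding d\<rho>_def \<rho>_def using Z1 by simp
    have drhob: "d\<rho> \<le> db" using realroot[of dr] dr da0 dbh1 unfolding d\<rho>_def \<rho>_def by simp
    have rhoP: "pgf X (complex_of_real \<rho>) = complex_of_real (P d\<rho>)"
      unfolding P_def d\<rho>_def using pgf_of_real[of \<rho> X] rad[of \<rho>] drho0 drhob dbh1 h1 h0z
      unfolding d\<rho>_def by simp
    have Ppos: "0 < P d\<rho>" using Phi[of d\<rho>] drho0 drhob dbh1 by auto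
    have Zreal: "Z0 = complex_of_real \<rho>"
    proof (rule ccontr)
      assume ne: "Z0 \<noteq> complex_of_real \<rho>"
      have lt: "cmod (pgf X Z0) < pgf_real X \<rho>"
      proof -
        have "Z0 \<noteq> 0" using Z1 by auto
        thus ?thesis using strict_max[of \<rho> Z0] ne Zr Z1 unfolding \<rho>_def by simp
      qed
      have "\<rho>^s = cmod (pgf X Z0) ^ n" using arg_cong[OF Zroot, of cmod] unfolding \<rho>_def by (simp add: norm_power)
      also have "\<dots> < (pgf_real X \<rho>) ^ n" using lt n0 by (intro power_strict_mono) auto
      finally have "(1 + d\<rho>)^s < P d\<rho> ^ n" unfolding P_def d\<rho>_def by simp
      hence Fn: "F d\<rho> < 0" unfolding F_def using pow_ln_less[of "1+d\<rho>" "P d\<rho>" s n] drho0 Ppos by simp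
      have "da < d\<rho>" using Fpos[OF drho0] Fn by force
      then obtain d2' where d2': "da \<le> d2'" "d2' \<le> d\<rho>" "F d2' = 0"
        using IVT2'[of F d\<rho> 0 da] Fn Fpos[OF da0 order_refl] cont[of da d\<rho>] da0 drhob dbh1 by force
      have "d2' \<noteq> d\<rho>" using d2' Fn by auto
      hence "d2' < d\<rho>" using d2' by simp
      moreover have "\<rho> \<le> 1 + d2'" using realroot[of d2'] d2' da0 drhob dbh1 unfolding \<rho>_def by simp
      ultimately show False unfolding d\<rho>_def by simp
    qed
    have Froot: "F d\<rho> = 0"
    proof -
      have "complex_of_real (\<rho>^s) = complex_of_real (P d\<rho> ^ n)" using Zroot rhoP unfolding Zreal by simp
      hence "(1+d\<rho>)^s = P d\<rho> ^ n" unfolding d\<rho>_def of_real_eq_iff by simp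
      thus ?thesis unfolding F_def using pow_ln_eq[of "1+d\<rho>" "P d\<rho>" s n] drho0 Ppos by simp
    qed
    have qd: "q*d\<rho> \<le> ustar" using drhob q0 unfolding db_def by (simp add: field_simps)
    have root: "\<bar>\<gamma> - a*(q*d\<rho>)\<bar> \<le> D*(ustar + ustar^2)/q"
      using core_root[OF a0 D0 q1 _ drho0 qd] approx[of d\<rho>] Froot drho0 drhob dbh1 by simp
    define T where "T = real (N+1) * ln \<rho>"
    define A where "A = 2 * L * \<gamma> * \<mu> / \<sigma>2"
    have A_eq: "A = L*\<gamma>/a" unfolding A_def a_def using mu sig by (simp add: field_simps)
    have L0: "0 < L" using L1 L_bounds by simp
    have NL: "real (N+1) = L*q" unfolding L_def q_def using s0 by simp
    have TA: "\<bar>T - A\<bar> \<le> E0/q"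
    proof -
      have lnb: "\<bar>ln (1+d\<rho>) - d\<rho>\<bar> \<le> d\<rho>^2" by (rule ln_abs2) (use drho0 in simp)
      have "T - A = L*q*(ln (1+d\<rho>) - d\<rho>) + (L/a)*(a*(q*d\<rho>) - \<gamma>)"
        unfolding T_def A_eq NL d\<rho>_def using a0 by (simp add: field_simps)
      moreover have "\<bar>L*q*(ln (1+d\<rho>) - d\<rho>)\<bar> \<le> L2 * ustar^2 / q"
      proof -
        have "\<bar>L*q*(ln (1+d\<rho>) - d\<rho>)\<bar> \<le> L*q*d\<rho>^2" using lnb L0 q0 by (simp add: abs_mult)
        also have "L*q*d\<rho>^2 = L*(q*d\<rho>)^2/q" using q0 by (simp add: power2_eq_square)
        also have "\<dots> \<le> L2*ustar^2/q" using L2 L0 q0 qd drho0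
          by (intro divide_right_mono mult_mono power_mono) auto
        finally show ?thesis .
      qed
      moreover have "\<bar>(L/a)*(a*(q*d\<rho>) - \<gamma>)\<bar> \<le> L2/a * (D*(ustar+ustar^2)) / q"
      proof -
        have "\<bar>(L/a)*(a*(q*d\<rho>) - \<gamma>)\<bar> = (L/a) * \<bar>\<gamma> - a*(q*d\<rho>)\<bar>" using L0 a0 by (simp add: abs_mult abs_minus_commute)
        also have "\<dots> \<le> (L2/a) * (D*(ustar + ustar^2)/q)" using root L2 L0 a0
          by (intro mult_mono divide_right_mono) auto
        finally show ?thesis by simp
      qed
      ultimately have "\<bar>T - A\<bar> \<le> L2 * ustar^2 / q + L2/a * (D*(ustar+ustar^2)) / q"
        using abs_triangle_ineq[of "L*q*(ln (1+d\<rho>) - d\<rho>)" "(L/a)*(a*(q*d\<rho>) - \<gamma>)"] by (smt (verit))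
      also have "\<dots> = E0/q" unfolding E0_def by (simp add: add_divide_distrib)
      finally show ?thesis .
    qed
    have E00: "0 \<le> E0" unfolding E0_def using L_bounds a0 D0 ust0 by simp
    have "E0 * 1 \<le> E0 * q" using q1 E00 by (intro mult_left_mono) auto
    hence "E0/q \<le> E0" using q0 by (simp add: divide_le_eq)
    hence eTA: "\<bar>T - A\<bar> \<le> E0" using TA by linarith
    have "1 / Z0 ^ (N+1) = complex_of_real (exp (-T))"
    proof -
      have rp: "0 < \<rho>" using drho0 unfolding d\<rho>_def by simp
      have "exp T = \<rho>^(N+1)" unfolding T_def ln_realpow[symmetric] using rp by simp
      hence "\<rho>^(N+1) = exp T" by simp
      hence "Z0^(N+1) = complex_of_real (exp T)" unfolding Zreal by (simp only: of_real_power[symmetric])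
      thus ?thesis by (simp add: exp_minus of_real_inverse divide_inverse)
    qed
    hence "cmod (1 / Z0 ^ (N + 1) - complex_of_real (exp (- A))) = \<bar>exp (-T) - exp (-A)\<bar>"
      by (simp flip: of_real_diff)
    also have "\<dots> = exp (-A) * \<bar>exp (-(T-A)) - 1\<bar>"
      by (simp add: abs_mult exp_diff exp_minus field_simps)
    also have "\<dots> \<le> exp (-A) * (\<bar>T-A\<bar> * exp \<bar>T-A\<bar>)"
      using exp_sub1[of "-(T-A)"] by (intro mult_left_mono) (auto simp: abs_minus_commute)
    also have "\<dots> \<le> exp (-A) * (E0/q * exp E0)"
      using TA eTA by (intro mult_left_mono mult_mono) auto
    also have "\<dots> = E0 * exp E0 * exp (-A) / q" by simp
    finally show ?thesis unfolding A_def q_def by simp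
  qed
  show ?thesis
    unfolding Let_def \<mu>_def[symmetric] \<sigma>2_def[symmetric]
    apply (intro exI[of _ "E0 * exp E0"] exI[of _ "nat \<lceil>Q^2\<rceil>"] allI impI)
    apply (elim conjE)
    apply (rule main[OF refl refl])
    apply assumption+
    done
qed

end
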